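(* Let $a=\{a_1,\dots,a_m\}\subseteq\mathbb{Z}_{\ge 2}$ and $n\ge 0$. Then $\chi_{\mathcal{A}_n(a)}(t)=\chi_{\widetilde{\mathcal{C}}_n}(t-1)$.
   Context: For a set $a=\{a_1,\dots,a_m\}$ of integers $\ge2$ and $n\ge 1$, $\mathcal{A}_n(a)$ denotes the hyperplane arrangement in $\mathbb{R}^n$ consisting of the hyperplanes $x_i=0$ ($1\le i\le n$), $x_i=x_j$ ($1\le i<j\le n$), and $x_i=a_rx_j$ ($1\le i\neq j\le n$, $1\le r\le m$). $\widetilde{\mathcal{C}}_n$ denotes the arrangement in $\mathbb{R}^n$ consisting of the hyperplanes $x_i-x_j=0$ ($1\le i<j\le n$) and $x_i-x_j=\log a_r/\log a_1$ ($1\le i\neq j\le n$, $1\le r\le m$; for $r=1$ this is $x_i-x_j=1$). For $n=0$ both are empty arrangements in $\mathbb{R}^0$ with characteristic polynomial $1$. For a finite arrangement $\mathcal{A}$ of affine hyperplanes in $\mathbb{R}^n$, the characteristic polynomial is $\chi_{\mathcal{A}}(t)=\sum_{\mathcal{B}}(-1)^{\#\mathcal{B}}t^{n-\operatorname{rank}(\mathcal{B})}$, the sum over subsets $\mathcal{B}\subseteq\mathcal{A}$ whose hyperplanes have nonempty common intersection, where $\operatorname{rank}(\mathcal{B})$ is the dimension of the span of the normal vectors of the hyperplanes in $\mathcal{B}$. *)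

theory Defs
  imports "HOL-Analysis.Analysis" "HOL-Computational_Algebra.Polynomial" "HOL-Library.Function_Algebras"
begin

text \<open>An affine hyperplane in R^n is given by a pair (w, c) of a (nonzero) normal
  vector w and a constant c; it is the set of x with sum of w i * x i over i < n equal to c.
  Vectors in R^n are functions nat => real, only coordinates i < n being relevant.\<close>

type_synonym hyperplane = "(nat \<Rightarrow> real) \<times> real"

definition hyp_set :: "nat \<Rightarrow> hyperplane \<Rightarrow> (nat \<Rightarrow> real) set" where
  "hyp_set n H = {x. (\<Sum>i<n. fst H i * x i) = snd H}"

definition arr_rank :: "hyperplane set \<Rightarrow> nat" where
  "arr_rank B = vector_space.dim (\<lambda>(c::real) (v::nat \<Rightarrow> real) i. c * v i) (fst ` B)"

definition char_poly :: "nat \<Rightarrow> hyperplane set \<Rightarrow> real poly" where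
  "char_poly n A =
     (\<Sum>B \<in> {B. B \<subseteq> A \<and> (\<Inter>H\<in>B. hyp_set n H) \<noteq> {}}.
        smult ((-1) ^ card B) (monom 1 (n - arr_rank B)))"

definition unitv :: "nat \<Rightarrow> nat \<Rightarrow> real" where
  "unitv i = (\<lambda>k. if k = i then 1 else 0)"

definition arrA :: "nat \<Rightarrow> int set \<Rightarrow> hyperplane set" where
  "arrA n a =
     {(unitv i, 0) | i. i < n}
   \<union> {((\<lambda>k. unitv i k - unitv j k), 0) | i j. i < j \<and> j < n}
   \<union> {((\<lambda>k. unitv i k - of_int r * unitv j k), 0) | i j r. i < n \<and> j < n \<and> i \<noteq> j \<and> r \<in> a}"

definition arrC :: "nat \<Rightarrow> int set \<Rightarrow> int \<Rightarrow> hyperplane set" where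
  "arrC n a a1 =
     {((\<lambda>k. unitv i k - unitv j k), 0) | i j. i < j \<and> j < n}
   \<union> {((\<lambda>k. unitv i k - unitv j k), ln (of_int r) / ln (of_int a1)) | i j r.
         i < n \<and> j < n \<and> i \<noteq> j \<and> r \<in> a}"

end

theory Submission
  imports Defs
begin


interpretation fv: vector_space "\<lambda>(c::real) (v::nat\<Rightarrow>real) i. c * v i"
  by unfold_locales (auto simp: algebra_simps fun_eq_iff)

lemma vs_real: "vector_space ((*) :: real\<Rightarrow>real\<Rightarrow>real)"
  by unfold_locales (simp_all add: algebra_simps)

interpretation fvr: vector_space_pair "\<lambda>(c::real) (v::nat\<Rightarrow>real) i. c * v i" "(*) :: real\<Rightarrow>real\<Rightarrow>real"
  unfolding vector_space_pair_def using fv.vector_space_axioms vs_real by simp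

lemma fv_dim_insert_new:
  assumes "finite X" "x \<notin> fv.span X"
  shows "fv.dim (insert x X) = Suc (fv.dim X)"
proof -
  obtain B where B: "B \<subseteq> X" "fv.independent B" "X \<subseteq> fv.span B" "card B = fv.dim X"
    using fv.basis_exists by blast
  have fB: "finite B" using B(1) assms(1) finite_subset by blast
  have spB: "fv.span B = fv.span X"
    using B(1,3) by (simp add: fv.span_eq fv.span_superset subset_trans[OF B(1)])
  have xB: "x \<notin> fv.span B" using spB assms(2) by simp
  have ind: "fv.independent (insert x B)" using fv.independent_insertI[OF xB B(2)] .
  have "x \<notin> B" using xB fv.span_superset by blast
  hence c: "card (insert x B) = Suc (card B)" using fB by simp
  have "card (insert x B) = fv.dim (insert x X)"
    apply (rule fv.basis_card_eq_dim)
    using B(1) apply blast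
    using B(3) fv.span_mono[of B "insert x B"] fv.span_superset[of "insert x B"] apply blast
    using ind .
  with c B(4) show ?thesis by simp
qed

lemma fv_dim_insert_old:
  assumes "x \<in> fv.span X"
  shows "fv.dim (insert x X) = fv.dim X"
  by (metis assms fv.dim_span fv.span_redundant)

lemma unitv_apply: "unitv i k = (if k = i then 1 else 0)"
  by (simp add: unitv_def)

lemma fv_subspaceI:
  assumes "P 0" "\<And>x y. P x \<Longrightarrow> P y \<Longrightarrow> P (x + y)" "\<And>c x. P x \<Longrightarrow> P (\<lambda>i. c * x i)"
  shows "fv.subspace (Collect P)"
  using assms unfolding fv.subspace_def by auto

lemma fv_span_scaleI: "x \<in> fv.span S \<Longrightarrow> (\<lambda>i. c * x i) \<in> fv.span S"
  using fv.span_scale by blast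

locale wgraph =
  fixes n :: nat and w :: "nat \<Rightarrow> real" and G :: "(nat \<Rightarrow> real) set"
  assumes wpos: "\<And>i. i < n \<Longrightarrow> w i > 0"
  and finG: "finite G"
  and genG: "\<And>g. g \<in> G \<Longrightarrow> \<exists>i j c. i<n \<and> j<n \<and> g = (\<lambda>t. c * (w j * unitv i t - w i * unitv j t))"
begin

definition dv :: "nat \<Rightarrow> nat \<Rightarrow> nat \<Rightarrow> real" where
  "dv k l = (\<lambda>t. w l * unitv k t - w k * unitv l t)"
definition rel where "rel k l \<longleftrightarrow> dv k l \<in> fv.span G"
definition cls where "cls k = {l. l < n \<and> rel k l}"

lemma rel_refl: "rel k k"
  unfolding rel_def dv_def using fv.span_zero by (simp add: zero_fun_def)

lemma rel_sym: assumes "rel k l" shows "rel l k"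
proof -
  have "dv l k = - dv k l" by (auto simp: dv_def fun_eq_iff)
  thus ?thesis using assms fv.span_neg unfolding rel_def by metis
qed

lemma rel_trans: assumes "rel k l" "rel l m" "l < n" shows "rel k m"
proof -
  have "(\<lambda>t. w m * dv k l t) + (\<lambda>t. w k * dv l m t) \<in> fv.span G"
    using assms(1,2) unfolding rel_def by (intro fv.span_add fv_span_scaleI)
  moreover have "(\<lambda>t. w m * dv k l t) + (\<lambda>t. w k * dv l m t) = (\<lambda>t. w l * dv k m t)"
    by (auto simp: dv_def fun_eq_iff algebra_simps)
  ultimately have "(\<lambda>t. (1 / w l) * (w l * dv k m t)) \<in> fv.span G"
    using fv_span_scaleI by metis
  moreover have "(\<lambda>t. (1 / w l) * (w l * dv k m t)) = dv k m"
    using wpos[OF assms(3)] by (auto simp: fun_eq_iff)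
  ultimately show ?thesis unfolding rel_def by simp
qed

lemma cls_eq: assumes "rel k l" "k < n" "l < n" shows "cls k = cls l"
  unfolding cls_def using assms rel_sym rel_trans by blast

lemma fin_cls: "finite (cls k)" unfolding cls_def by simp

lemma self_cls: "k < n \<Longrightarrow> k \<in> cls k" unfolding cls_def using rel_refl by simp

definition sig where "sig k v = (\<Sum>t\<in>cls k. w t * v t)"

lemma sig_unitv: "sig k (unitv i) = (if i \<in> cls k then w i else 0)"
  unfolding sig_def unitv_apply using fin_cls
  by (simp add: if_distrib[of "\<lambda>x. w _ * x"] sum.If_cases cong: if_cong)

lemma sig_gen: assumes "g \<in> G" shows "sig k g = 0"
proof -
  obtain i j c where ij: "i<n" "j<n" "g = (\<lambda>t. c * (w j * unitv i t - w i * unitv j t))"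
    using genG[OF assms] by blast
  show ?thesis
  proof (cases "c = 0")
    case True thus ?thesis using ij by (simp add: sig_def)
  next
    case False
    have "(\<lambda>t. (1/c) * g t) \<in> fv.span G" using assms fv.span_superset fv_span_scaleI by blast
    moreover have "(\<lambda>t. (1/c) * g t) = dv i j" using False ij by (auto simp: dv_def fun_eq_iff)
    ultimately have r: "rel i j" unfolding rel_def by simp
    have iff: "i \<in> cls k \<longleftrightarrow> j \<in> cls k"
      using r rel_sym rel_trans ij unfolding cls_def by blast
    have "sig k g = c * (w j * sig k (unitv i) - w i * sig k (unitv j))"
      unfolding sig_def ij by (simp add: sum_distrib_left sum_subtractf algebra_simps)
    also have "\<dots> = 0" using iff by (simp add: sig_unitv)
    finally show ?thesis .
  qed
qed

lemma memb:
  assumes "k < n" "S \<subseteq> {..<n}"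
  shows "unitv k \<in> fv.span (G \<union> unitv ` S) \<longleftrightarrow> (\<exists>l\<in>S. rel k l)"
proof
  assume "\<exists>l\<in>S. rel k l"
  then obtain l where l: "l \<in> S" "rel k l" by blast
  have "dv k l \<in> fv.span (G \<union> unitv ` S)"
    using l(2) fv.span_mono[of G "G \<union> unitv ` S"] unfolding rel_def by blast
  moreover have "unitv l \<in> fv.span (G \<union> unitv ` S)" using l(1) by (intro fv.span_base) blast
  ultimately have "dv k l + (\<lambda>t. w k * unitv l t) \<in> fv.span (G \<union> unitv ` S)"
    by (intro fv.span_add fv_span_scaleI)
  moreover have "dv k l + (\<lambda>t. w k * unitv l t) = (\<lambda>t. w l * unitv k t)"
    by (auto simp: dv_def fun_eq_iff)
  ultimately have "(\<lambda>t. (1 / w l) * (w l * unitv k t)) \<in> fv.span (G \<union> unitv ` S)"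
    using fv_span_scaleI by metis
  moreover have "(\<lambda>t. (1 / w l) * (w l * unitv k t)) = unitv k"
    using wpos[of l] l(1) assms(2) by (auto simp: fun_eq_iff)
  ultimately show "unitv k \<in> fv.span (G \<union> unitv ` S)" by simp
next
  assume m: "unitv k \<in> fv.span (G \<union> unitv ` S)"
  show "\<exists>l\<in>S. rel k l"
  proof (rule ccontr)
    assume nr: "\<not> (\<exists>l\<in>S. rel k l)"
    have sub: "fv.subspace {v. sig k v = 0}"
      by (rule fv_subspaceI) (auto simp: sig_def sum.distrib sum_distrib_left[symmetric] algebra_simps)
    have "sig k (unitv k) = 0"
    proof (rule fv.span_induct[OF m sub])
      fix x assume "x \<in> G \<union> unitv ` S"
      then show "sig k x = 0"
      proof
        assume "x \<in> G" thus ?thesis by (rule sig_gen)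
      next
        assume "x \<in> unitv ` S"
        then obtain l where "l \<in> S" "x = unitv l" by blast
        moreover have "l \<notin> cls k" using nr \<open>l \<in> S\<close> unfolding cls_def by blast
        ultimately show ?thesis by (simp add: sig_unitv)
      qed
    qed
    moreover have "sig k (unitv k) = w k" using self_cls[OF assms(1)] by (simp add: sig_unitv)
    ultimately show False using wpos[OF assms(1)] by simp
  qed
qed

lemma dimS:
  assumes "S \<subseteq> {..<n}"
  shows "fv.dim (G \<union> unitv ` S) = fv.dim G + card (cls ` S)"
proof -
  have "finite S" using assms finite_subset by blast
  thus ?thesis using assms
  proof (induction S rule: finite_induct)
    case empty thus ?case by simp
  next
    case (insert k S)
    have kn: "k < n" and Sn: "S \<subseteq> {..<n}" using insert.prems by auto
    have eq: "G \<union> unitv ` insert k S = insert (unitv k) (G \<union> unitv ` S)" by auto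
    show ?case
    proof (cases "\<exists>l\<in>S. rel k l")
      case True
      then obtain l where l: "l \<in> S" "rel k l" by blast
      have "cls k = cls l" using cls_eq[OF l(2) kn] l(1) Sn by auto
      hence c: "cls ` insert k S = cls ` S" using l(1) by auto
      have "unitv k \<in> fv.span (G \<union> unitv ` S)" using memb[OF kn Sn] True by simp
      thus ?thesis unfolding eq c using fv_dim_insert_old insert.IH[OF Sn] by simp
    next
      case False
      have "unitv k \<notin> fv.span (G \<union> unitv ` S)" using memb[OF kn Sn] False by simp
      hence d: "fv.dim (insert (unitv k) (G \<union> unitv ` S)) = Suc (fv.dim (G \<union> unitv ` S))"
        using fv_dim_insert_new finG insert.hyps(1) by blast
      have "cls k \<notin> cls ` S"
      proof
        assume "cls k \<in> cls ` S"
        then obtain l where "l \<in> S" "cls k = cls l" by blast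
        hence "k \<in> cls l" using self_cls[OF kn] by simp
        hence "rel l k" unfolding cls_def by simp
        thus False using False \<open>l \<in> S\<close> rel_sym by blast
      qed
      hence "card (cls ` insert k S) = Suc (card (cls ` S))" using insert.hyps(1) by simp
      thus ?thesis unfolding eq d using insert.IH[OF Sn] by simp
    qed
  qed
qed

end

lemma dim_unitv_all: "fv.dim (unitv ` {..<n}) = n"
proof -
  interpret W: wgraph n "\<lambda>_. 1" "{}" by unfold_locales auto
  have "W.cls k = {k}" if "k < n" for k
  proof -
    have "W.rel k l \<longleftrightarrow> k = l" for l
    proof -
      have "W.rel k l \<longleftrightarrow> W.dv k l = 0" unfolding W.rel_def by simp
      also have "\<dots> \<longleftrightarrow> k = l" unfolding W.dv_def
        by (auto simp: fun_eq_iff unitv_apply dest: spec[of _ k])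
      finally show ?thesis .
    qed
    thus ?thesis unfolding W.cls_def using that by auto
  qed
  hence "W.cls ` {..<n} = (\<lambda>k. {k}) ` {..<n}" by auto
  moreover have "card ((\<lambda>k. {k}) ` {..<n}) = n" by (subst card_image) (auto simp: inj_on_def)
  moreover have "fv.dim {} = 0" using fv.dim_eq_card_independent[OF fv.independent_empty] by simp
  ultimately show ?thesis using W.dimS[of "{..<n}"] by simp
qed

context wgraph begin

lemma dim_total: "n = fv.dim G + card (cls ` {..<n})"
proof -
  have "G \<subseteq> fv.span (unitv ` {..<n})"
  proof
    fix g assume "g \<in> G"
    then obtain i j c where ij: "i<n" "j<n" "g = (\<lambda>t. c * (w j * unitv i t - w i * unitv j t))"
      using genG by blast
    have "unitv i \<in> fv.span (unitv ` {..<n})" "unitv j \<in> fv.span (unitv ` {..<n})"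
      using ij by (auto intro!: fv.span_base)
    hence "(\<lambda>t. c * (((\<lambda>t. w j * unitv i t) - (\<lambda>t. w i * unitv j t)) t)) \<in> fv.span (unitv ` {..<n})"
      by (intro fv_span_scaleI fv.span_diff)
    thus "g \<in> fv.span (unitv ` {..<n})" using ij(3) by simp
  qed
  hence "fv.span (G \<union> unitv ` {..<n}) = fv.span (unitv ` {..<n})"
    by (auto simp: fv.span_eq intro: fv.span_superset[THEN subsetD])
  hence "fv.dim (G \<union> unitv ` {..<n}) = n" using dim_unitv_all fv.span_eq_dim by metis
  thus ?thesis using dimS[of "{..<n}"] by simp
qed

end



lemma pow_split_sum:
  assumes "finite A" "finite B" "A \<inter> B = {}"
  shows "(\<Sum>C\<in>Pow (A \<union> B). f C) = (\<Sum>X\<in>Pow A. \<Sum>Y\<in>Pow B. f (X \<union> Y))"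
proof -
  have eq: "Pow (A \<union> B) = (\<lambda>(X,Y). X \<union> Y) ` (Pow A \<times> Pow B)"
  proof
    show "Pow (A \<union> B) \<subseteq> (\<lambda>(X,Y). X \<union> Y) ` (Pow A \<times> Pow B)"
    proof
      fix C assume "C \<in> Pow (A \<union> B)"
      hence "C = (\<lambda>(X,Y). X \<union> Y) (C \<inter> A, C \<inter> B)" by auto
      moreover have "(C \<inter> A, C \<inter> B) \<in> Pow A \<times> Pow B" by auto
      ultimately show "C \<in> (\<lambda>(X,Y). X \<union> Y) ` (Pow A \<times> Pow B)" by blast
    qed
  qed auto
  have inj: "inj_on (\<lambda>(X,Y). X \<union> Y) (Pow A \<times> Pow B)"
  proof (rule inj_onI, clarify)
    fix X Y X' Y' assume h: "X \<subseteq> A" "Y \<subseteq> B" "X' \<subseteq> A" "Y' \<subseteq> B" "X \<union> Y = X' \<union> Y'"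
    have "X = (X \<union> Y) \<inter> A" "X' = (X' \<union> Y') \<inter> A" "Y = (X \<union> Y) \<inter> B" "Y' = (X' \<union> Y') \<inter> B"
      using h assms(3) by auto
    thus "X = X' \<and> Y = Y'" using h(5) by simp
  qed
  have "(\<Sum>C\<in>Pow (A \<union> B). f C) = (\<Sum>p\<in>Pow A \<times> Pow B. f ((\<lambda>(X,Y). X \<union> Y) p))"
    unfolding eq by (rule sum.reindex[OF inj, unfolded comp_def])
  also have "\<dots> = (\<Sum>X\<in>Pow A. \<Sum>Y\<in>Pow B. f (X \<union> Y))"
    by (subst sum.cartesian_product) (simp add: split_def)
  finally show ?thesis .
qed

lemma pow_insert_sum:
  assumes "finite A" "k \<notin> A"
  shows "(\<Sum>S\<in>Pow (insert k A). f S) = (\<Sum>S\<in>Pow A. f S + f (insert k S))"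
proof -
  have d: "Pow A \<inter> insert k ` Pow A = {}" using assms(2) by auto
  have i: "inj_on (insert k) (Pow A)"
  proof (rule inj_onI)
    fix X Y assume "X \<in> Pow A" "Y \<in> Pow A" "insert k X = insert k Y"
    moreover have "k \<notin> X" "k \<notin> Y" using assms(2) \<open>X \<in> Pow A\<close> \<open>Y \<in> Pow A\<close> by auto
    ultimately show "X = Y" using insert_ident by metis
  qed
  have "(\<Sum>S\<in>Pow (insert k A). f S) = (\<Sum>S\<in>Pow A \<union> insert k ` Pow A. f S)"
    by (simp only: Pow_insert)
  also have "\<dots> = (\<Sum>S\<in>Pow A. f S) + (\<Sum>S\<in>insert k ` Pow A. f S)"
    by (rule sum.union_disjoint) (use assms d in auto)
  also have "(\<Sum>S\<in>insert k ` Pow A. f S) = (\<Sum>S\<in>Pow A. f (insert k S))"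
    by (rule sum.reindex_cong[OF i]) auto
  finally show ?thesis by (simp add: sum.distrib)
qed

lemma alt_sum:
  assumes "finite K" "K \<noteq> {}"
  shows "(\<Sum>Y\<in>Pow K. (-1::real) ^ card Y) = 0"
proof -
  obtain k where "k \<in> K" using assms(2) by blast
  define K' where "K' = K - {k}"
  have K: "K = insert k K'" "k \<notin> K'" using \<open>k \<in> K\<close> by (auto simp: K'_def)
  have fK': "finite K'" using assms(1) K by simp
  have "(\<Sum>Y\<in>Pow K. (-1::real) ^ card Y) = (\<Sum>S\<in>Pow K'. (-1) ^ card S + (-1) ^ card (insert k S))"
    unfolding K(1) by (rule pow_insert_sum[OF fK' K(2)])
  also have "\<dots> = 0"
  proof (rule sum.neutral, rule ballI)
    fix S assume "S \<in> Pow K'"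
    hence "k \<notin> S" "finite S" using K(2) fK' finite_subset by auto
    thus "(-1::real) ^ card S + (-1) ^ card (insert k S) = 0" by simp
  qed
  finally show ?thesis .
qed

lemma monom1_pow: "monom (1::real) k = [:0,1:] ^ k"
  by (simp add: monom_altdef)

lemma pcompose_monom1: "pcompose (monom (1::real) k) q = q ^ k"
  by (induction k) (simp_all add: monom1_pow pcompose_mult pcompose_pCons pcompose_1)

lemma smult_sum_right: "smult c (sum f A) = (\<Sum>i\<in>A. smult c (f i))"
  by (induction A rule: infinite_finite_induct) (simp_all add: smult_add_right)

lemma comb:
  fixes cls :: "nat \<Rightarrow> 'b"
  assumes "finite U"
  shows "(\<Sum>S\<in>Pow U. smult ((-1)^card S) (monom (1::real) (card (cls`U) - card (cls`S))))
         = [:-1,1:] ^ card (cls`U)"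
  using assms
proof (induction "card U" arbitrary: U rule: less_induct)
  case less
  show ?case
  proof (cases "U = {}")
    case True thus ?thesis by simp
  next
    case False
    then obtain k where k: "k \<in> U" by blast
    define K where "K = {l\<in>U. cls l = cls k}"
    define U' where "U' = U - K"
    have fK: "finite K" and fU': "finite U'" using less.prems by (auto simp: K_def U'_def)
    have U: "U = U' \<union> K" and dj: "U' \<inter> K = {}" by (auto simp: U'_def K_def)
    have kK: "k \<in> K" using k by (simp add: K_def)
    have lt: "card U' < card U" using k kK less.prems by (auto simp: U'_def intro!: psubset_card_mono)
    have IH: "(\<Sum>S\<in>Pow U'. smult ((-1)^card S) (monom (1::real) (card (cls`U') - card (cls`S))))
         = [:-1,1:] ^ card (cls`U')" using less.hyps[OF lt fU'] .
    have clsK: "Y \<subseteq> K \<Longrightarrow> cls ` Y = (if Y = {} then {} else {cls k})" for Y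
      by (auto simp: K_def) (metis (mono_tags, lifting) image_eqI mem_Collect_eq subsetD)
    have nclsX: "X \<subseteq> U' \<Longrightarrow> cls k \<notin> cls ` X" for X by (auto simp: U'_def K_def)
    have cU: "card (cls ` U) = Suc (card (cls ` U'))"
    proof -
      have "cls ` U = insert (cls k) (cls ` U')" using kK unfolding U by (auto simp: K_def)
      thus ?thesis using nclsX[of U'] fU' by simp
    qed
    define c' where "c' = card (cls ` U')"
    have inner: "(\<Sum>Y\<in>Pow K. smult ((-1)^card (X \<union> Y)) (monom (1::real) (card (cls`U) - card (cls`(X \<union> Y)))))
        = smult ((-1)^card X) (monom 1 (c' - card (cls ` X))) * [:-1,1:]" if X: "X \<subseteq> U'" for X
    proof -
      have fX: "finite X" using X fU' finite_subset by blast
      have mle: "card (cls ` X) \<le> c'" unfolding c'_def using X fU' by (intro card_mono) auto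
      have trm: "smult ((-1)^card (X \<union> Y)) (monom (1::real) (card (cls`U) - card (cls`(X \<union> Y))))
          = smult ((-1)^card X) (smult ((-1)^card Y) (if Y = {} then monom 1 (Suc (c' - card (cls ` X)))
               else monom 1 (c' - card (cls ` X))))" if Y: "Y \<subseteq> K" for Y
      proof -
        have fY: "finite Y" using Y fK finite_subset by blast
        have cXY: "card (X \<union> Y) = card X + card Y" using X Y dj fX fY by (intro card_Un_disjoint) auto
        have clsXY: "cls ` (X \<union> Y) = cls ` X \<union> (if Y = {} then {} else {cls k})"
          using clsK[OF Y] by (simp add: image_Un)
        have "card (cls ` (X \<union> Y)) = card (cls ` X) + (if Y = {} then 0 else 1)"
          unfolding clsXY using nclsX[OF X] fX by auto
        thus ?thesis using cXY cU mle unfolding c'_def[symmetric]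
          by (auto simp: power_add Suc_diff_le)
      qed
      have "(\<Sum>Y\<in>Pow K. smult ((-1)^card (X \<union> Y)) (monom (1::real) (card (cls`U) - card (cls`(X \<union> Y)))))
        = smult ((-1)^card X) (\<Sum>Y\<in>Pow K. smult ((-1)^card Y) (if Y = {} then monom 1 (Suc (c' - card (cls ` X)))
               else monom 1 (c' - card (cls ` X))))"
        by (simp add: trm smult_sum_right)
      also have "(\<Sum>Y\<in>Pow K. smult ((-1)^card Y) (if Y = {} then monom 1 (Suc (c' - card (cls ` X)))
               else monom (1::real) (c' - card (cls ` X))))
           = monom 1 (Suc (c' - card (cls ` X))) + (\<Sum>Y\<in>Pow K - {{}}. smult ((-1)^card Y) (monom 1 (c' - card (cls ` X))))"
      proof -
        have "(\<Sum>Y\<in>Pow K. smult ((-1)^card Y) (if Y = {} then monom 1 (Suc (c' - card (cls ` X)))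
               else monom (1::real) (c' - card (cls ` X)))) = 
             smult ((-1)^card ({}::nat set)) (monom 1 (Suc (c' - card (cls ` X)))) +
             (\<Sum>Y\<in>Pow K - {{}}. smult ((-1)^card Y) (if Y = {} then monom 1 (Suc (c' - card (cls ` X)))
               else monom (1::real) (c' - card (cls ` X))))"
          using fK by (subst sum.remove[of _ "{}"]) auto
        moreover have "(\<Sum>Y\<in>Pow K - {{}}. smult ((-1)^card Y) (if Y = {} then monom 1 (Suc (c' - card (cls ` X)))
               else monom (1::real) (c' - card (cls ` X)))) = 
             (\<Sum>Y\<in>Pow K - {{}}. smult ((-1)^card Y) (monom (1::real) (c' - card (cls ` X))))"
          by (rule sum.cong) auto
        ultimately show ?thesis by simp
      qed
      also have "(\<Sum>Y\<in>Pow K - {{}}. smult ((-1)^card Y) (monom (1::real) (c' - card (cls ` X))))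
          = smult (\<Sum>Y\<in>Pow K - {{}}. (-1)^card Y) (monom (1::real) (c' - card (cls ` X)))"
        by (simp add: smult_sum)
      also have "(\<Sum>Y\<in>Pow K - {{}}. (-1::real)^card Y) = -1"
      proof -
        have "(\<Sum>Y\<in>Pow K. (-1::real)^card Y) = (-1)^card ({}::nat set) + (\<Sum>Y\<in>Pow K - {{}}. (-1::real)^card Y)"
          using fK by (subst sum.remove[of _ "{}"]) auto
        moreover have "K \<noteq> {}" using kK by blast
        ultimately show ?thesis using alt_sum[OF fK] by simp
      qed
      finally show ?thesis
        by (simp add: monom1_pow algebra_simps)
    qed
    have "(\<Sum>S\<in>Pow U. smult ((-1)^card S) (monom (1::real) (card (cls`U) - card (cls`S))))
        = (\<Sum>X\<in>Pow U'. smult ((-1)^card X) (monom 1 (c' - card (cls ` X))) * [:-1,1:])"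
    proof -
      have "(\<Sum>S\<in>Pow U. smult ((-1)^card S) (monom (1::real) (card (cls`U) - card (cls`S))))
          = (\<Sum>X\<in>Pow U'. \<Sum>Y\<in>Pow K. smult ((-1)^card (X \<union> Y)) (monom (1::real) (card (cls`U) - card (cls`(X \<union> Y)))))"
        using pow_split_sum[OF fU' fK dj, of "\<lambda>S. smult ((-1)^card S) (monom (1::real) (card (cls`U) - card (cls`S)))"]
        by (simp add: U[symmetric])
      also have "\<dots> = (\<Sum>X\<in>Pow U'. smult ((-1)^card X) (monom 1 (c' - card (cls ` X))) * [:-1,1:])"
        by (rule sum.cong) (auto simp: inner)
      finally show ?thesis .
    qed
    also have "\<dots> = [:-1,1:] ^ c' * [:-1,1:]"
      by (subst sum_distrib_right[symmetric]) (simp only: IH[unfolded c'_def[symmetric]])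
    finally show ?thesis using cU c'_def by simp
  qed
qed



definition Iset :: "nat \<Rightarrow> int set \<Rightarrow> (nat \<times> nat \<times> int) set" where
  "Iset n a = {(i,j,1) | i j. i<j \<and> j<n} \<union> {(i,j,r) | i j r. i<n \<and> j<n \<and> i\<noteq>j \<and> r\<in>a}"

definition nA :: "nat \<times> nat \<times> int \<Rightarrow> nat \<Rightarrow> real" where
  "nA p = (case p of (i,j,r) \<Rightarrow> (\<lambda>k. unitv i k - of_int r * unitv j k))"
definition nC :: "nat \<times> nat \<times> int \<Rightarrow> nat \<Rightarrow> real" where
  "nC p = (case p of (i,j,r) \<Rightarrow> (\<lambda>k. unitv i k - unitv j k))"
definition cC :: "int \<Rightarrow> nat \<times> nat \<times> int \<Rightarrow> real" where
  "cC a1 p = (case p of (i,j,r) \<Rightarrow> ln (of_int r) / ln (of_int a1))"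
definition coord :: "nat \<Rightarrow> hyperplane" where "coord i = (unitv i, 0)"

lemma Iset_mem:
  assumes "(i,j,r) \<in> Iset n a" "\<forall>r\<in>a. r \<ge> 2"
  shows "i < n" "j < n" "i \<noteq> j" "r \<ge> 1" "r = 1 \<or> r \<in> a"
  using assms unfolding Iset_def by auto

lemma finite_Iset: assumes "finite a" shows "finite (Iset n a)"
proof -
  have "Iset n a \<subseteq> {..<n} \<times> {..<n} \<times> (insert 1 a)" unfolding Iset_def by auto
  thus ?thesis using assms finite_subset by blast
qed

lemma arrA_eq: "arrA n a = coord ` {..<n} \<union> (\<lambda>p. (nA p, 0)) ` Iset n a"
proof -
  have 1: "{(unitv i, 0) | i. i<n} = coord ` {..<n}" by (auto simp: coord_def)
  have 2: "{((\<lambda>k. unitv i k - unitv j k), 0) | i j. i<j \<and> j<n} =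
      (\<lambda>p. (nA p, 0::real)) ` {(i,j,1) | i j. i<j \<and> j<n}"
  proof (intro equalityI subsetI)
    fix x :: hyperplane assume "x \<in> {((\<lambda>k. unitv i k - unitv j k), 0::real) | i j. i<j \<and> j<n}"
    then obtain i j where "i<j" "j<n" "x = ((\<lambda>k. unitv i k - unitv j k), 0)" by blast
    moreover have "(\<lambda>k. unitv i k - unitv j k) = nA (i,j,1)" by (simp add: nA_def)
    ultimately show "x \<in> (\<lambda>p. (nA p, 0::real)) ` {(i,j,1) | i j. i<j \<and> j<n}" by blast
  next
    fix x :: hyperplane assume "x \<in> (\<lambda>p. (nA p, 0::real)) ` {(i,j,1) | i j. i<j \<and> j<n}"
    then obtain i j where "i<j" "j<n" "x = (nA (i,j,1), 0)" by blast
    moreover have "(\<lambda>k. unitv i k - unitv j k) = nA (i,j,1)" by (simp add: nA_def)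
    ultimately have "x = ((\<lambda>k. unitv i k - unitv j k), 0)" by simp
    thus "x \<in> {((\<lambda>k. unitv i k - unitv j k), 0::real) | i j. i<j \<and> j<n}" using \<open>i<j\<close> \<open>j<n\<close> by blast
  qed
  have 3: "{((\<lambda>k. unitv i k - of_int r * unitv j k), 0) | i j r. i < n \<and> j < n \<and> i \<noteq> j \<and> r \<in> a} =
      (\<lambda>p. (nA p, 0::real)) ` {(i,j,r) | i j r. i<n \<and> j<n \<and> i\<noteq>j \<and> r\<in>a}"
  proof (intro equalityI subsetI)
    fix x :: hyperplane assume "x \<in> {((\<lambda>k. unitv i k - of_int r * unitv j k), 0::real) | i j r. i < n \<and> j < n \<and> i \<noteq> j \<and> r \<in> a}"
    then obtain i j r where "i<n" "j<n" "i\<noteq>j" "r\<in>a" "x = ((\<lambda>k. unitv i k - of_int r * unitv j k), 0)" by blast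
    moreover have "(\<lambda>k. unitv i k - of_int r * unitv j k) = nA (i,j,r)" by (simp add: nA_def)
    ultimately show "x \<in> (\<lambda>p. (nA p, 0::real)) ` {(i,j,r) | i j r. i<n \<and> j<n \<and> i\<noteq>j \<and> r\<in>a}" by blast
  next
    fix x :: hyperplane assume "x \<in> (\<lambda>p. (nA p, 0::real)) ` {(i,j,r) | i j r. i<n \<and> j<n \<and> i\<noteq>j \<and> r\<in>a}"
    then obtain i j r where "i<n" "j<n" "i\<noteq>j" "r\<in>a" "x = (nA (i,j,r), 0)" by blast
    moreover have "(\<lambda>k. unitv i k - of_int r * unitv j k) = nA (i,j,r)" by (simp add: nA_def)
    ultimately have "x = ((\<lambda>k. unitv i k - of_int r * unitv j k), 0)" by simp
    thus "x \<in> {((\<lambda>k. unitv i k - of_int r * unitv j k), 0::real) | i j r. i < n \<and> j < n \<and> i \<noteq> j \<and> r \<in> a}" 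
      using \<open>i<n\<close> \<open>j<n\<close> \<open>i\<noteq>j\<close> \<open>r\<in>a\<close> by blast
  qed
  show ?thesis unfolding arrA_def Iset_def image_Un 1 2 3 by blast
qed

lemma arrC_eq: "arrC n a a1 = (\<lambda>p. (nC p, cC a1 p)) ` Iset n a"
proof -
  have 2: "{((\<lambda>k. unitv i k - unitv j k), 0) | i j. i<j \<and> j<n} =
      (\<lambda>p. (nC p, cC a1 p)) ` {(i,j,1) | i j. i<j \<and> j<n}"
  proof (intro equalityI subsetI)
    fix x :: hyperplane assume "x \<in> {((\<lambda>k. unitv i k - unitv j k), 0::real) | i j. i<j \<and> j<n}"
    then obtain i j where "i<j" "j<n" "x = ((\<lambda>k. unitv i k - unitv j k), 0)" by blast
    moreover have "(\<lambda>k. unitv i k - unitv j k) = nC (i,j,1)" "cC a1 (i,j,1) = 0" by (simp_all add: nC_def cC_def)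
    ultimately show "x \<in> (\<lambda>p. (nC p, cC a1 p)) ` {(i,j,1) | i j. i<j \<and> j<n}" by force
  next
    fix x :: hyperplane assume "x \<in> (\<lambda>p. (nC p, cC a1 p)) ` {(i,j,1) | i j. i<j \<and> j<n}"
    then obtain i j where "i<j" "j<n" "x = (nC (i,j,1), cC a1 (i,j,1))" by blast
    moreover have "(\<lambda>k. unitv i k - unitv j k) = nC (i,j,1)" "cC a1 (i,j,1) = 0" by (simp_all add: nC_def cC_def)
    ultimately have "x = ((\<lambda>k. unitv i k - unitv j k), 0)" by simp
    thus "x \<in> {((\<lambda>k. unitv i k - unitv j k), 0::real) | i j. i<j \<and> j<n}" using \<open>i<j\<close> \<open>j<n\<close> by blast
  qed
  have 3: "{((\<lambda>k. unitv i k - unitv j k), ln (of_int r) / ln (of_int a1)) | i j r. i < n \<and> j < n \<and> i \<noteq> j \<and> r \<in> a} =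
      (\<lambda>p. (nC p, cC a1 p)) ` {(i,j,r) | i j r. i<n \<and> j<n \<and> i\<noteq>j \<and> r\<in>a}"
  proof (intro equalityI subsetI)
    fix x :: hyperplane assume "x \<in> {((\<lambda>k. unitv i k - unitv j k), ln (of_int r) / ln (of_int a1)) | i j r. i < n \<and> j < n \<and> i \<noteq> j \<and> r \<in> a}"
    then obtain i j r where "i<n" "j<n" "i\<noteq>j" "r\<in>a" "x = ((\<lambda>k. unitv i k - unitv j k), ln (of_int r) / ln (of_int a1))" by blast
    moreover have "(\<lambda>k. unitv i k - unitv j k) = nC (i,j,r)" "cC a1 (i,j,r) = ln (of_int r) / ln (of_int a1)" by (simp_all add: nC_def cC_def)
    ultimately show "x \<in> (\<lambda>p. (nC p, cC a1 p)) ` {(i,j,r) | i j r. i<n \<and> j<n \<and> i\<noteq>j \<and> r\<in>a}" by force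
  next
    fix x :: hyperplane assume "x \<in> (\<lambda>p. (nC p, cC a1 p)) ` {(i,j,r) | i j r. i<n \<and> j<n \<and> i\<noteq>j \<and> r\<in>a}"
    then obtain i j r where "i<n" "j<n" "i\<noteq>j" "r\<in>a" "x = (nC (i,j,r), cC a1 (i,j,r))" by blast
    moreover have "(\<lambda>k. unitv i k - unitv j k) = nC (i,j,r)" "cC a1 (i,j,r) = ln (of_int r) / ln (of_int a1)" by (simp_all add: nC_def cC_def)
    ultimately have "x = ((\<lambda>k. unitv i k - unitv j k), ln (of_int r) / ln (of_int a1))" by simp
    thus "x \<in> {((\<lambda>k. unitv i k - unitv j k), ln (of_int r) / ln (of_int a1)) | i j r. i < n \<and> j < n \<and> i \<noteq> j \<and> r \<in> a}" 
      using \<open>i<n\<close> \<open>j<n\<close> \<open>i\<noteq>j\<close> \<open>r\<in>a\<close> by blast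
  qed
  show ?thesis unfolding arrC_def Iset_def image_Un 2 3 by blast
qed

lemma nA_inj:
  assumes a: "\<forall>r\<in>a. r \<ge> 2" and p: "p \<in> Iset n a" and q: "q \<in> Iset n a" and e: "nA p = nA q"
  shows "p = q"
proof -
  obtain i j r where P: "p = (i,j,r)" by (cases p) auto
  obtain i' j' r' where Q: "q = (i',j',r')" by (cases q) auto
  have hp: "i \<noteq> j" "r \<ge> 1" using Iset_mem[OF p[unfolded P] a] by auto
  have hq: "i' \<noteq> j'" "r' \<ge> 1" using Iset_mem[OF q[unfolded Q] a] by auto
  have ev: "unitv i t - of_int r * unitv j t = unitv i' t - of_int r' * unitv j' t" for t
    using e unfolding P Q nA_def by (auto dest: fun_cong[of _ _ t])
  have "i = i'"
  proof (rule ccontr)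
    assume "i \<noteq> i'"
    hence "1 = - of_int r' * unitv j' i" using ev[of i] hp by (simp add: unitv_apply)
    thus False using hq by (auto simp: unitv_apply split: if_splits)
  qed
  moreover have "- of_int r = - of_int r' * unitv j' j" using ev[of j] hp hq \<open>i = i'\<close> by (simp add: unitv_apply)
  hence "j = j' \<and> r = r'" using hp by (auto simp: unitv_apply split: if_splits)
  ultimately show ?thesis using P Q by simp
qed

lemma nC_inj:
  assumes a: "\<forall>r\<in>a. r \<ge> 2" and a1: "a1 \<ge> 2" and p: "p \<in> Iset n a" and q: "q \<in> Iset n a"
    and e: "nC p = nC q" and c: "cC a1 p = cC a1 q"
  shows "p = q"
proof -
  obtain i j r where P: "p = (i,j,r)" by (cases p) auto
  obtain i' j' r' where Q: "q = (i',j',r')" by (cases q) auto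
  have hp: "i \<noteq> j" "r \<ge> 1" using Iset_mem[OF p[unfolded P] a] by auto
  have hq: "i' \<noteq> j'" "r' \<ge> 1" using Iset_mem[OF q[unfolded Q] a] by auto
  have ev: "unitv i t - unitv j t = unitv i' t - unitv j' t" for t
    using e unfolding P Q nC_def by (auto dest: fun_cong[of _ _ t])
  have "i = i'"
  proof (rule ccontr)
    assume "i \<noteq> i'"
    hence "1 = - unitv j' i" using ev[of i] hp by (simp add: unitv_apply)
    thus False by (auto simp: unitv_apply split: if_splits)
  qed
  moreover have "j = j'"
  proof (rule ccontr)
    assume "j \<noteq> j'"
    hence "-1 = unitv i' j" using ev[of j] hp by (simp add: unitv_apply)
    thus False by (auto simp: unitv_apply split: if_splits)
  qed
  moreover have "r = r'"
  proof -
    have "ln (of_int a1) > (0::real)" using a1 by simp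
    hence "ln (of_int r) = ln (real_of_int r')" using c unfolding P Q cC_def by (simp add: divide_cancel_right)
    thus ?thesis using hp hq by simp
  qed
  ultimately show ?thesis using P Q by simp
qed

lemma coord_nA_disj:
  assumes a: "\<forall>r\<in>a. r \<ge> 2" and p: "p \<in> Iset n a"
  shows "unitv k \<noteq> nA p"
proof
  assume e: "unitv k = nA p"
  obtain i j r where P: "p = (i,j,r)" by (cases p) auto
  have hp: "i \<noteq> j" "r \<ge> 1" using Iset_mem[OF p[unfolded P] a] by auto
  have "unitv k j = - of_int r" using fun_cong[OF e, of j] hp unfolding P nA_def by (simp add: unitv_apply)
  thus False using hp by (auto simp: unitv_apply split: if_splits)
qed



definition cons :: "int \<Rightarrow> (nat \<times> nat \<times> int) set \<Rightarrow> bool" where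
  "cons a1 J \<longleftrightarrow> (\<exists>y::nat\<Rightarrow>real. \<forall>(i,j,r)\<in>J. y i - y j = ln (of_int r) / ln (of_int a1))"

lemma span_mult_transfer:
  assumes "x \<in> fv.span X" "\<And>g. g \<in> X \<Longrightarrow> (\<lambda>t. g t * m t) \<in> fv.span Y"
  shows "(\<lambda>t. x t * m t) \<in> fv.span Y"
proof -
  have sub: "fv.subspace {x. (\<lambda>t. x t * m t) \<in> fv.span Y}"
  proof (rule fv_subspaceI)
    show "(\<lambda>t. 0 t * m t) \<in> fv.span Y" using fv.span_zero by (simp add: zero_fun_def)
  next
    fix x y assume "(\<lambda>t. x t * m t) \<in> fv.span Y" "(\<lambda>t. y t * m t) \<in> fv.span Y"
    hence "(\<lambda>t. x t * m t) + (\<lambda>t. y t * m t) \<in> fv.span Y" by (rule fv.span_add)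
    thus "(\<lambda>t. (x + y) t * m t) \<in> fv.span Y" by (simp add: algebra_simps plus_fun_def)
  next
    fix c x assume "(\<lambda>t. x t * m t) \<in> fv.span Y"
    hence "(\<lambda>t. c * (x t * m t)) \<in> fv.span Y" by (rule fv_span_scaleI)
    thus "(\<lambda>t. (\<lambda>i. c * x i) t * m t) \<in> fv.span Y" by (simp add: algebra_simps)
  qed
  show ?thesis using fv.span_induct[OF assms(1) sub] assms(2) by auto
qed

lemma perJ_cons:
  assumes a: "finite a" "\<forall>r\<in>a. r \<ge> 2" and a1: "a1 \<ge> 2" and J: "J \<subseteq> Iset n a" and c: "cons a1 J"
  shows "(\<Sum>S\<in>Pow {..<n}. smult ((-1)^card S) (monom (1::real) (n - fv.dim (unitv ` S \<union> nA ` J))))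
         = [:-1,1:] ^ (n - fv.dim (nC ` J))"
proof -
  obtain y :: "nat \<Rightarrow> real" where y: "\<And>i j r. (i,j,r) \<in> J \<Longrightarrow> y i - y j = ln (of_int r) / ln (of_int a1)"
    using c unfolding cons_def by fast
  define d where "d t = (of_int a1 :: real) powr (y t)" for t
  have dpos: "d t > 0" for t using a1 by (simp add: d_def)
  have la1: "ln (of_int a1 :: real) > 0" using a1 by simp
  have ratio: "of_int r = d i / d j" if "(i,j,r) \<in> J" for i j r
  proof -
    have r1: "r \<ge> 1" using Iset_mem[of i j r n a] that J a(2) by auto
    have "d i / d j = (of_int a1 :: real) powr (y i - y j)" by (simp add: d_def powr_diff)
    also have "\<dots> = exp (ln (of_int r) / ln (of_int a1) * ln (of_int a1))"
      using y[OF that] a1 by (simp add: powr_def)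
    also have "\<dots> = of_int r" using la1 r1 by simp
    finally show ?thesis by simp
  qed
  have fJ: "finite J" using J finite_Iset[OF a(1)] finite_subset by blast
  have memJ: "i < n" "j < n" "i \<noteq> j" if "(i,j,r) \<in> J" for i j r using Iset_mem[of i j r n a] that J a(2) by auto
  interpret WA: wgraph n d "nA ` J"
  proof
    show "finite (nA ` J)" using fJ by simp
  next
    fix g assume "g \<in> nA ` J"
    then obtain i j r where p: "(i,j,r) \<in> J" "g = nA (i,j,r)" by (metis imageE prod_cases3)
    have "g = (\<lambda>t. (1 / d j) * (d j * unitv i t - d i * unitv j t))"
      using p ratio[OF p(1)] dpos[of j] by (auto simp: nA_def fun_eq_iff field_simps)
    thus "\<exists>i j c. i < n \<and> j < n \<and> g = (\<lambda>t. c * (d j * unitv i t - d i * unitv j t))"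
      using memJ[OF p(1)] by blast
  qed (use dpos in auto)
  interpret WC: wgraph n "\<lambda>_. 1" "nC ` J"
  proof
    show "finite (nC ` J)" using fJ by simp
  next
    fix g assume "g \<in> nC ` J"
    then obtain i j r where p: "(i,j,r) \<in> J" "g = nC (i,j,r)" by (metis imageE prod_cases3)
    have "g = (\<lambda>t. 1 * (1 * unitv i t - 1 * unitv j t))" using p by (auto simp: nC_def)
    thus "\<exists>i j c. i < n \<and> j < n \<and> g = (\<lambda>t. c * (1 * unitv i t - 1 * unitv j t))"
      using memJ[OF p(1)] by blast
  qed auto
  have CA: "(\<lambda>t. g t * (1 / d t)) \<in> fv.span (nA ` J)" if "g \<in> nC ` J" for g
  proof -
    obtain i j r where p: "(i,j,r) \<in> J" "g = nC (i,j,r)" using \<open>g \<in> nC ` J\<close> by (metis imageE prod_cases3)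
    have eq: "(\<lambda>t. nC (i,j,r) t * (1 / d t)) = (\<lambda>t. (1 / d i) * nA (i,j,r) t)"
      using ratio[OF p(1)] dpos[of i] dpos[of j]
      by (auto simp: nA_def nC_def fun_eq_iff field_simps unitv_apply)
    have "nA (i,j,r) \<in> fv.span (nA ` J)" using p(1) by (intro fv.span_base) blast
    hence "(\<lambda>t. (1 / d i) * nA (i,j,r) t) \<in> fv.span (nA ` J)" by (rule fv_span_scaleI)
    thus ?thesis using eq p(2) by simp
  qed
  have AC: "(\<lambda>t. g t * d t) \<in> fv.span (nC ` J)" if "g \<in> nA ` J" for g
  proof -
    obtain i j r where p: "(i,j,r) \<in> J" "g = nA (i,j,r)" using \<open>g \<in> nA ` J\<close> by (metis imageE prod_cases3)
    have eq: "(\<lambda>t. nA (i,j,r) t * d t) = (\<lambda>t. d i * nC (i,j,r) t)"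
      using ratio[OF p(1)] dpos[of i] dpos[of j]
      by (auto simp: nA_def nC_def fun_eq_iff field_simps unitv_apply)
    have "nC (i,j,r) \<in> fv.span (nC ` J)" using p(1) by (intro fv.span_base) blast
    hence "(\<lambda>t. d i * nC (i,j,r) t) \<in> fv.span (nC ` J)" by (rule fv_span_scaleI)
    thus ?thesis using eq p(2) by simp
  qed
  have relAC: "WA.rel k l \<longleftrightarrow> WC.rel k l" if "k < n" "l < n" for k l
  proof
    assume "WA.rel k l"
    hence "(\<lambda>t. WA.dv k l t * d t) \<in> fv.span (nC ` J)"
      unfolding WA.rel_def by (rule span_mult_transfer) (rule AC)
    hence "(\<lambda>t. (1 / (d k * d l)) * (WA.dv k l t * d t)) \<in> fv.span (nC ` J)" by (rule fv_span_scaleI)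
    moreover have "(\<lambda>t. (1 / (d k * d l)) * (WA.dv k l t * d t)) = WC.dv k l"
      using dpos[of k] dpos[of l] by (auto simp: WA.dv_def WC.dv_def fun_eq_iff unitv_apply)
    ultimately show "WC.rel k l" unfolding WC.rel_def by simp
  next
    assume "WC.rel k l"
    hence "(\<lambda>t. WC.dv k l t * (1 / d t)) \<in> fv.span (nA ` J)"
      unfolding WC.rel_def by (rule span_mult_transfer) (rule CA)
    hence "(\<lambda>t. (d k * d l) * (WC.dv k l t * (1 / d t))) \<in> fv.span (nA ` J)" by (rule fv_span_scaleI)
    moreover have "(\<lambda>t. (d k * d l) * (WC.dv k l t * (1 / d t))) = WA.dv k l"
      using dpos[of k] dpos[of l] by (auto simp: WA.dv_def WC.dv_def fun_eq_iff unitv_apply)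
    ultimately show "WA.rel k l" unfolding WA.rel_def by simp
  qed
  have clsAC: "WA.cls k = WC.cls k" if "k < n" for k
    unfolding WA.cls_def WC.cls_def using relAC that by auto
  have imgAC: "WA.cls ` {..<n} = WC.cls ` {..<n}" using clsAC by auto
  have totA: "n = fv.dim (nA ` J) + card (WA.cls ` {..<n})" by (rule WA.dim_total)
  have totC: "n = fv.dim (nC ` J) + card (WA.cls ` {..<n})" using WC.dim_total imgAC by simp
  have "(\<Sum>S\<in>Pow {..<n}. smult ((-1)^card S) (monom (1::real) (n - fv.dim (unitv ` S \<union> nA ` J))))
     = (\<Sum>S\<in>Pow {..<n}. smult ((-1)^card S) (monom (1::real) (card (WA.cls ` {..<n}) - card (WA.cls ` S))))"
  proof (rule sum.cong[OF refl])
    fix S assume "S \<in> Pow {..<n}"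
    hence "fv.dim (unitv ` S \<union> nA ` J) = fv.dim (nA ` J) + card (WA.cls ` S)"
      using WA.dimS[of S] by (simp add: Un_commute)
    hence "n - fv.dim (unitv ` S \<union> nA ` J) = card (WA.cls ` {..<n}) - card (WA.cls ` S)"
      using totA by linarith
    thus "smult ((-1)^card S) (monom (1::real) (n - fv.dim (unitv ` S \<union> nA ` J))) =
          smult ((-1)^card S) (monom (1::real) (card (WA.cls ` {..<n}) - card (WA.cls ` S)))"
      by simp
  qed
  also have "\<dots> = [:-1,1:] ^ card (WA.cls ` {..<n})" by (rule comb) simp
  also have "card (WA.cls ` {..<n}) = n - fv.dim (nC ` J)" using totC by simp
  finally show ?thesis .
qed



lemma functional_exists:
  assumes "finite X" "k \<notin> fv.span X"
  shows "\<exists>\<phi>::(nat\<Rightarrow>real)\<Rightarrow>real. (\<forall>u v. \<phi> (u + v) = \<phi> u + \<phi> v) \<and> (\<forall>c u. \<phi> (\<lambda>i. c * u i) = c * \<phi> u)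
            \<and> \<phi> k = 1 \<and> (\<forall>v\<in>X. \<phi> v = 0)"
proof -
  obtain B where B: "B \<subseteq> X" "fv.independent B" "X \<subseteq> fv.span B" "card B = fv.dim X"
    using fv.basis_exists by blast
  have spB: "fv.span B = fv.span X"
    using B(1,3) by (simp add: fv.span_eq fv.span_superset subset_trans[OF B(1)])
  have kB: "k \<notin> fv.span B" using spB assms(2) by simp
  have ind: "fv.independent (insert k B)" using fv.independent_insertI[OF kB B(2)] .
  obtain g where g: "Vector_Spaces.linear (\<lambda>c v i. c * v i) (*) g"
    "\<forall>x\<in>insert k B. g x = (if x = k then 1 else 0)"
    using fvr.linear_independent_extend[OF ind, of "\<lambda>x. if x = k then 1 else (0::real)"] by blast
  have add: "\<forall>u v. g (u + v) = g u + g v" and hom: "\<forall>c u. g (\<lambda>i. c * u i) = c * g u"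
    using g(1) unfolding Vector_Spaces.linear_iff by auto
  have gk: "g k = 1" using g(2) by simp
  have gB: "g b = 0" if "b \<in> B" for b
  proof -
    have "b \<noteq> k" using that kB fv.span_superset by blast
    thus ?thesis using g(2) that by auto
  qed
  have sub: "fv.subspace {v. g v = 0}"
  proof (rule fv_subspaceI)
    have "g (\<lambda>i. 0 * k i) = 0 * g k" using hom by blast
    thus "g 0 = 0" by (simp add: zero_fun_def)
  qed (use add hom in auto)
  have "g v = 0" if "v \<in> X" for v
    using fv.span_induct[OF _ sub, of v B] B(3) that gB by auto
  thus ?thesis using add hom gk by blast
qed

definition sat :: "(nat \<times> nat \<times> int) set \<Rightarrow> (nat \<Rightarrow> real) \<Rightarrow> bool" where
  "sat J x \<longleftrightarrow> (\<forall>(i,j,r)\<in>J. x i = of_int r * x j)"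

lemma sol_exists:
  assumes fJ: "finite J" and k: "unitv k \<notin> fv.span (nA ` J)"
  shows "\<exists>x. sat J x \<and> x k \<noteq> 0"
proof -
  obtain \<phi> :: "(nat\<Rightarrow>real)\<Rightarrow>real" where add: "\<forall>u v. \<phi> (u + v) = \<phi> u + \<phi> v"
    and hom: "\<forall>c u. \<phi> (\<lambda>i. c * u i) = c * \<phi> u" and pk: "\<phi> (unitv k) = 1" and pX: "\<forall>v\<in>nA ` J. \<phi> v = 0"
    using functional_exists[of "nA ` J" "unitv k"] fJ k by auto
  define x where "x t = \<phi> (unitv t)" for t
  have "sat J x" unfolding sat_def
  proof (clarify)
    fix i j r assume p: "(i,j,r) \<in> J"
    have e: "nA (i,j,r) = unitv i + (\<lambda>t. (- of_int r) * unitv j t)" by (auto simp: nA_def fun_eq_iff)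
    have h1: "\<phi> (unitv i + (\<lambda>t. (- of_int r) * unitv j t)) = \<phi> (unitv i) + \<phi> (\<lambda>t. (- of_int r) * unitv j t)"
      using add by blast
    have h2: "\<phi> (\<lambda>t. (- of_int r) * unitv j t) = (- of_int r) * \<phi> (unitv j)" using hom by blast
    have "\<phi> (nA (i,j,r)) = x i - of_int r * x j" unfolding e h1 h2 x_def by simp
    moreover have "\<phi> (nA (i,j,r)) = 0" using pX p by blast
    ultimately show "x i = of_int r * x j" by simp
  qed
  moreover have "x k \<noteq> 0" using pk by (simp add: x_def)
  ultimately show ?thesis by blast
qed

lemma sat_comb: assumes "sat J x" "sat J z" shows "sat J (\<lambda>t. x t + s * z t)"
  unfolding sat_def
proof clarify
  fix i j r assume p: "(i,j,r) \<in> J"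
  have "x i = of_int r * x j" "z i = of_int r * z j" using assms p unfolding sat_def by auto
  thus "x i + s * z i = of_int r * (x j + s * z j)" by (simp add: algebra_simps)
qed

lemma sol_all:
  assumes "\<And>k. k < n \<Longrightarrow> \<exists>x. sat J x \<and> x k \<noteq> 0"
  shows "\<exists>x. sat J x \<and> (\<forall>t<n. x t \<noteq> 0)"
proof -
  have "m \<le> n \<Longrightarrow> \<exists>x. sat J x \<and> (\<forall>t<m. x t \<noteq> 0)" for m
  proof (induction m)
    case 0 show ?case by (rule exI[of _ "\<lambda>_. 0"]) (simp add: sat_def)
  next
    case (Suc m)
    then obtain x where x: "sat J x" "\<forall>t<m. x t \<noteq> 0" by auto
    obtain z where z: "sat J z" "z m \<noteq> 0" using assms[of m] Suc.prems by (metis Suc_le_lessD)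
    show ?case
    proof (cases "x m = 0")
      case False thus ?thesis using x less_Suc_eq by blast
    next
      case True
      have "finite (insert 0 ((\<lambda>t. - x t / z t) ` {..<m}))" by simp
      then obtain s :: real where s: "s \<notin> insert 0 ((\<lambda>t. - x t / z t) ` {..<m})"
        using ex_new_if_finite[OF infinite_UNIV_char_0] by blast
      have "sat J (\<lambda>t. x t + s * z t)" by (rule sat_comb[OF x(1) z(1)])
      moreover have "\<forall>t<Suc m. x t + s * z t \<noteq> 0"
      proof (intro allI impI)
        fix t assume t: "t < Suc m"
        show "x t + s * z t \<noteq> 0"
        proof (cases "t = m")
          case True thus ?thesis using \<open>x m = 0\<close> z(2) s by simp
        next
          case False
          hence tm: "t < m" using t by simp
          show ?thesis
          proof (cases "z t = 0")
            case True thus ?thesis using x(2) tm by simp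
          next
            case False
            show ?thesis
            proof
              assume "x t + s * z t = 0"
              hence "s = - x t / z t" using False by (simp add: field_simps)
              thus False using s tm by auto
            qed
          qed
        qed
      qed
      ultimately show ?thesis by blast
    qed
  qed
  thus ?thesis by simp
qed

lemma incons_unit:
  assumes a: "finite a" "\<forall>r\<in>a. r \<ge> 2" and J: "J \<subseteq> Iset n a" and nc: "\<not> cons a1 J"
  shows "\<exists>k<n. unitv k \<in> fv.span (nA ` J)"
proof (rule ccontr)
  assume "\<not> ?thesis"
  hence nk: "\<And>k. k < n \<Longrightarrow> unitv k \<notin> fv.span (nA ` J)" by blast
  have fJ: "finite J" using J finite_Iset[OF a(1)] finite_subset by blast
  obtain x where x: "sat J x" "\<forall>t<n. x t \<noteq> 0" using sol_all[of n J] sol_exists[OF fJ nk] by blast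
  define y where "y t = ln \<bar>x t\<bar> / ln (of_int a1)" for t
  have "cons a1 J" unfolding cons_def
  proof (rule exI[of _ y], clarify)
    fix i j r assume p: "(i,j,r) \<in> J"
    have m: "i < n" "j < n" "r \<ge> 1" using Iset_mem[of i j r n a] p J a(2) by auto
    have "x i = of_int r * x j" using x(1) p unfolding sat_def by blast
    hence "\<bar>x i\<bar> = of_int r * \<bar>x j\<bar>" using m(3) by (simp add: abs_mult)
    hence "ln \<bar>x i\<bar> = ln (of_int r) + ln \<bar>x j\<bar>" using m x(2) by (simp add: ln_mult)
    thus "y i - y j = ln (of_int r) / ln (of_int a1)" unfolding y_def by (simp add: add_divide_distrib)
  qed
  thus False using nc by simp
qed

lemma perJ_incons:
  assumes a: "finite a" "\<forall>r\<in>a. r \<ge> 2" and J: "J \<subseteq> Iset n a" and nc: "\<not> cons a1 J"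
  shows "(\<Sum>S\<in>Pow {..<n}. smult ((-1)^card S) (monom (1::real) (n - fv.dim (unitv ` S \<union> nA ` J)))) = 0"
proof -
  obtain k where k: "k < n" "unitv k \<in> fv.span (nA ` J)" using incons_unit[OF a J nc] by blast
  define U0 where "U0 = {..<n} - {k}"
  have U: "{..<n} = insert k U0" and kU0: "k \<notin> U0" and fU0: "finite U0" using k by (auto simp: U0_def)
  have "(\<Sum>S\<in>Pow {..<n}. smult ((-1)^card S) (monom (1::real) (n - fv.dim (unitv ` S \<union> nA ` J))))
      = (\<Sum>S\<in>Pow U0. smult ((-1)^card S) (monom (1::real) (n - fv.dim (unitv ` S \<union> nA ` J)))
          + smult ((-1)^card (insert k S)) (monom (1::real) (n - fv.dim (unitv ` (insert k S) \<union> nA ` J))))"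
    unfolding U by (rule pow_insert_sum[OF fU0 kU0])
  also have "\<dots> = 0"
  proof (rule sum.neutral, rule ballI)
    fix S assume S: "S \<in> Pow U0"
    have fS: "finite S" "k \<notin> S" using S fU0 kU0 finite_subset by auto
    have "unitv k \<in> fv.span (unitv ` S \<union> nA ` J)"
      using k(2) fv.span_mono[of "nA ` J" "unitv ` S \<union> nA ` J"] by blast
    hence "fv.dim (unitv ` (insert k S) \<union> nA ` J) = fv.dim (unitv ` S \<union> nA ` J)"
      using fv_dim_insert_old by simp
    thus "smult ((-1)^card S) (monom (1::real) (n - fv.dim (unitv ` S \<union> nA ` J)))
          + smult ((-1)^card (insert k S)) (monom (1::real) (n - fv.dim (unitv ` (insert k S) \<union> nA ` J))) = 0"
      using fS by simp
  qed
  finally show ?thesis .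
qed



lemma pow_image_sum:
  assumes "inj_on f A"
  shows "(\<Sum>X\<in>Pow (f ` A). h X) = (\<Sum>S\<in>Pow A. h (f ` S))"
proof -
  have "Pow (f ` A) = image f ` Pow A" by (rule image_Pow_surj[symmetric]) simp
  thus ?thesis using sum.reindex[OF inj_on_image_Pow[OF assms], of h] by (simp add: comp_def)
qed

lemma sum_unitv_diff: "i < n \<Longrightarrow> j < n \<Longrightarrow> (\<Sum>k<n. (unitv i k - unitv j k) * y k) = y i - y j"
  by (simp add: unitv_apply left_diff_distrib sum_subtractf if_distrib[of "\<lambda>x. x * y _"] cong: if_cong)

lemma hyp_C_nonempty:
  assumes a: "\<forall>r\<in>a. r \<ge> 2" and J: "J \<subseteq> Iset n a"
  shows "(\<Inter>H\<in>(\<lambda>p. (nC p, cC a1 p)) ` J. hyp_set n H) \<noteq> {} \<longleftrightarrow> cons a1 J"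
proof -
  have mm: "y \<in> (\<Inter>H\<in>(\<lambda>p. (nC p, cC a1 p)) ` J. hyp_set n H) \<longleftrightarrow>
        (\<forall>(i,j,r)\<in>J. y i - y j = ln (of_int r) / ln (of_int a1))" for y
  proof -
    have "y \<in> hyp_set n (nC (i,j,r), cC a1 (i,j,r)) \<longleftrightarrow> y i - y j = ln (of_int r) / ln (of_int a1)"
      if "(i,j,r) \<in> J" for i j r
    proof -
      have "i < n" "j < n" using Iset_mem[of i j r n a] that J a by auto
      thus ?thesis unfolding hyp_set_def nC_def cC_def by (simp add: sum_unitv_diff)
    qed
    hence e: "y \<in> hyp_set n (nC p, cC a1 p) \<longleftrightarrow> (case p of (i,j,r) \<Rightarrow> y i - y j = ln (of_int r) / ln (of_int a1))"
      if "p \<in> J" for p using that by (cases p) simp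
    have "y \<in> (\<Inter>H\<in>(\<lambda>p. (nC p, cC a1 p)) ` J. hyp_set n H) \<longleftrightarrow> (\<forall>p\<in>J. y \<in> hyp_set n (nC p, cC a1 p))"
      by simp
    also have "\<dots> \<longleftrightarrow> (\<forall>p\<in>J. case p of (i,j,r) \<Rightarrow> y i - y j = ln (of_int r) / ln (of_int a1))"
      using e by (rule ball_cong[OF refl])
    finally show ?thesis .
  qed
  have eq: "(\<Inter>H\<in>(\<lambda>p. (nC p, cC a1 p)) ` J. hyp_set n H) =
     {y. \<forall>(i,j,r)\<in>J. y i - y j = ln (of_int r) / ln (of_int a1)}"
    by (rule set_eqI) (simp only: mm mem_Collect_eq)
  show ?thesis unfolding cons_def eq by simp
qed

lemma charA:
  assumes a: "finite a" "\<forall>r\<in>a. r \<ge> 2"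
  shows "char_poly n (arrA n a) = (\<Sum>J\<in>Pow (Iset n a). smult ((-1)^card J)
           (\<Sum>S\<in>Pow {..<n}. smult ((-1)^card S) (monom (1::real) (n - fv.dim (unitv ` S \<union> nA ` J)))))"
proof -
  define I where "I = Iset n a"
  define fA where "fA p = (nA p, 0::real)" for p
  have fI: "finite I" using finite_Iset[OF a(1)] by (simp add: I_def)
  have arr: "arrA n a = coord ` {..<n} \<union> fA ` I" unfolding arrA_eq I_def fA_def by simp
  have injc: "inj_on coord {..<n}"
  proof (rule inj_onI)
    fix i j assume "coord i = coord j"
    hence "unitv i i = unitv j i" unfolding coord_def by simp
    thus "i = j" by (simp add: unitv_apply split: if_splits)
  qed
  have injA: "inj_on fA I" using nA_inj[OF a(2)] unfolding fA_def I_def by (auto simp: inj_on_def)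
  have disj: "coord ` {..<n} \<inter> fA ` I = {}"
    using coord_nA_disj[OF a(2)] unfolding coord_def fA_def I_def by auto
  have idx: "{B. B \<subseteq> arrA n a \<and> (\<Inter>H\<in>B. hyp_set n H) \<noteq> {}} = Pow (arrA n a)"
  proof -
    have "(\<lambda>_. 0) \<in> hyp_set n H" if "H \<in> arrA n a" for H
    proof -
      have "snd H = 0" using that unfolding arr coord_def fA_def by auto
      thus ?thesis unfolding hyp_set_def by simp
    qed
    thus ?thesis by blast
  qed
  define F where "F B = smult ((-1) ^ card B) (monom (1::real) (n - arr_rank B))" for B
  have "char_poly n (arrA n a) = (\<Sum>B\<in>Pow (coord ` {..<n} \<union> fA ` I). F B)"
    unfolding char_poly_def idx F_def by (simp only: arr)
  also have "\<dots> = (\<Sum>X\<in>Pow (coord ` {..<n}). \<Sum>Y\<in>Pow (fA ` I). F (X \<union> Y))"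
    by (rule pow_split_sum) (use fI disj in auto)
  also have "\<dots> = (\<Sum>S\<in>Pow {..<n}. \<Sum>J\<in>Pow I. F (coord ` S \<union> fA ` J))"
    by (simp add: pow_image_sum[OF injc] pow_image_sum[OF injA])
  also have "\<dots> = (\<Sum>S\<in>Pow {..<n}. \<Sum>J\<in>Pow I. smult ((-1)^card J) (smult ((-1)^card S)
                     (monom (1::real) (n - fv.dim (unitv ` S \<union> nA ` J)))))"
  proof (intro sum.cong refl)
    fix S J assume S: "S \<in> Pow {..<n}" and J: "J \<in> Pow I"
    have fS: "finite S" and fJ: "finite J" using S J fI finite_subset by auto
    have cS: "card (coord ` S) = card S" using inj_on_subset[OF injc] S by (simp add: card_image)
    have cJ: "card (fA ` J) = card J" using inj_on_subset[OF injA] J by (simp add: card_image)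
    have dj: "coord ` S \<inter> fA ` J = {}" using disj S J by blast
    have c: "card (coord ` S \<union> fA ` J) = card S + card J"
      using card_Un_disjoint[OF _ _ dj] fS fJ cS cJ by simp
    have r: "arr_rank (coord ` S \<union> fA ` J) = fv.dim (unitv ` S \<union> nA ` J)"
      unfolding arr_rank_def image_Un image_image coord_def fA_def by simp
    show "F (coord ` S \<union> fA ` J) = smult ((-1)^card J) (smult ((-1)^card S)
                     (monom (1::real) (n - fv.dim (unitv ` S \<union> nA ` J))))"
      unfolding F_def c r by (simp add: power_add mult.commute)
  qed
  also have "\<dots> = (\<Sum>J\<in>Pow I. \<Sum>S\<in>Pow {..<n}. smult ((-1)^card J) (smult ((-1)^card S)
                     (monom (1::real) (n - fv.dim (unitv ` S \<union> nA ` J)))))"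
    by (rule sum.swap)
  also have "\<dots> = (\<Sum>J\<in>Pow I. smult ((-1)^card J)
           (\<Sum>S\<in>Pow {..<n}. smult ((-1)^card S) (monom (1::real) (n - fv.dim (unitv ` S \<union> nA ` J)))))"
    by (simp add: smult_sum_right)
  finally show ?thesis unfolding I_def .
qed

lemma charC:
  assumes a: "finite a" "\<forall>r\<in>a. r \<ge> 2" and a1: "a1 \<ge> 2"
  shows "char_poly n (arrC n a a1) = (\<Sum>J\<in>Pow (Iset n a).
           if cons a1 J then smult ((-1)^card J) (monom (1::real) (n - fv.dim (nC ` J))) else 0)"
proof -
  define I where "I = Iset n a"
  define fC where "fC p = (nC p, cC a1 p)" for p
  have fI: "finite I" using finite_Iset[OF a(1)] by (simp add: I_def)
  have arr: "arrC n a a1 = fC ` I" unfolding arrC_eq I_def fC_def by simp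
  have injC: "inj_on fC I" using nC_inj[OF a(2) a1] unfolding fC_def I_def by (auto simp: inj_on_def)
  have ne: "J \<subseteq> I \<Longrightarrow> (\<Inter>H\<in>fC ` J. hyp_set n H) \<noteq> {} \<longleftrightarrow> cons a1 J" for J
    using hyp_C_nonempty[OF a(2), of J n a1] unfolding fC_def I_def by simp
  have idx: "{B. B \<subseteq> arrC n a a1 \<and> (\<Inter>H\<in>B. hyp_set n H) \<noteq> {}} = image fC ` {J\<in>Pow I. cons a1 J}"
  proof (intro equalityI subsetI)
    fix B assume "B \<in> {B. B \<subseteq> arrC n a a1 \<and> (\<Inter>H\<in>B. hyp_set n H) \<noteq> {}}"
    hence B: "B \<subseteq> fC ` I" "(\<Inter>H\<in>B. hyp_set n H) \<noteq> {}" unfolding arr by auto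
    define J where "J = {p\<in>I. fC p \<in> B}"
    have BJ: "B = fC ` J" using B(1) unfolding J_def by auto
    have "J \<subseteq> I" unfolding J_def by auto
    hence "cons a1 J" using ne B(2) BJ by simp
    thus "B \<in> image fC ` {J\<in>Pow I. cons a1 J}" using BJ \<open>J \<subseteq> I\<close> by blast
  next
    fix B assume "B \<in> image fC ` {J\<in>Pow I. cons a1 J}"
    then obtain J where J: "J \<subseteq> I" "cons a1 J" "B = fC ` J" by blast
    thus "B \<in> {B. B \<subseteq> arrC n a a1 \<and> (\<Inter>H\<in>B. hyp_set n H) \<noteq> {}}"
      using ne[OF J(1)] unfolding arr by auto
  qed
  have injP: "inj_on (image fC) {J\<in>Pow I. cons a1 J}"
    by (rule inj_on_subset[OF inj_on_image_Pow[OF injC]]) auto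
  have "char_poly n (arrC n a a1) = (\<Sum>J\<in>{J\<in>Pow I. cons a1 J}.
          smult ((-1) ^ card (fC ` J)) (monom (1::real) (n - arr_rank (fC ` J))))"
    unfolding char_poly_def idx by (subst sum.reindex[OF injP]) (simp add: comp_def)
  also have "\<dots> = (\<Sum>J\<in>{J\<in>Pow I. cons a1 J}. smult ((-1)^card J) (monom (1::real) (n - fv.dim (nC ` J))))"
  proof (rule sum.cong[OF refl])
    fix J assume "J \<in> {J\<in>Pow I. cons a1 J}"
    hence "card (fC ` J) = card J" using inj_on_subset[OF injC] by (simp add: card_image)
    moreover have "arr_rank (fC ` J) = fv.dim (nC ` J)"
      unfolding arr_rank_def image_image fC_def by simp
    ultimately show "smult ((-1) ^ card (fC ` J)) (monom (1::real) (n - arr_rank (fC ` J))) =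
         smult ((-1)^card J) (monom (1::real) (n - fv.dim (nC ` J)))" by simp
  qed
  also have "\<dots> = (\<Sum>J\<in>Pow I. if cons a1 J then smult ((-1)^card J) (monom (1::real) (n - fv.dim (nC ` J))) else 0)"
    by (rule sum.inter_filter) (use fI in simp)
  finally show ?thesis unfolding I_def .
qed

theorem theorem4p1:
  fixes a :: "int set" and a1 :: int and n :: nat
  assumes "finite a" and "\<forall>r\<in>a. r \<ge> 2" and "a1 \<in> a"
  shows "char_poly n (arrA n a) = pcompose (char_poly n (arrC n a a1)) [:-1, 1:]"
proof -
  have a1: "a1 \<ge> 2" using assms by blast
  have "char_poly n (arrA n a) = (\<Sum>J\<in>Pow (Iset n a).
           if cons a1 J then smult ((-1)^card J) ([:-1,1:] ^ (n - fv.dim (nC ` J))) else 0)"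
    unfolding charA[OF assms(1,2)]
  proof (rule sum.cong[OF refl])
    fix J assume "J \<in> Pow (Iset n a)"
    hence J: "J \<subseteq> Iset n a" by simp
    show "smult ((-1)^card J)
           (\<Sum>S\<in>Pow {..<n}. smult ((-1)^card S) (monom (1::real) (n - fv.dim (unitv ` S \<union> nA ` J))))
       = (if cons a1 J then smult ((-1)^card J) ([:-1,1:] ^ (n - fv.dim (nC ` J))) else 0)"
      using perJ_cons[OF assms(1,2) a1 J] perJ_incons[OF assms(1,2) J] by auto
  qed
  also have "\<dots> = pcompose (char_poly n (arrC n a a1)) [:-1, 1:]"
    unfolding charC[OF assms(1,2) a1] pcompose_sum
    by (rule sum.cong[OF refl]) (simp add: pcompose_smult pcompose_monom1)
  finally show ?thesis .
qed


end
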